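(* Let $P=[0,1]$. No online algorithm for the all-time worst-case (ATWC) dispersion problem in $P$ achieves a competitive ratio better than $2\ln 2$ ($\approx 1.386$).
   Context: Let $P\subset\mathbb{R}^k$ be a $k$-dimensional polytope with boundary $\partial P$; all distances $dis(\cdot,\cdot)$ are Euclidean. An instance is a sequence $S=((s_1,d_1),\dots,(s_n,d_n))$ of arrival and departure times with $s_i<d_i$ and $0=s_1\le s_2\le\dots\le s_n$; point $i$ is present at time $t$ iff $s_i\le t\le d_i$; $T=\max_i d_i$. For locations $X=(X_1,\dots,X_n)\in P^n$ and $t\le T$, let $d_{min}(t;X)=\min\{dis(X_i,\partial P),\ dis(X_i,X_j)\}$, the minimum taken over present points $i\neq j$ at time $t$. Let $OPT_A(S;P)=\max_{X}\min_{t\le T} d_{min}(t;X)$. In the online ATWC problem, an algorithm is notified of each arrival/departure event as it occurs and, when point $i$ arrives, must irrevocably choose $X_i\in P$ without knowing future events or the total number $n$ of points; the events are chosen by an adaptive adversary who knows the algorithm and sees its outputs so far. An online algorithm is $\sigma$-competitive (has competitive ratio $\sigma$) if for every instance $S$, $OPT_A(S;P)\le \sigma\cdot \min_{t\le T} d_{min}(t;X)$ where $X$ is the algorithm's output. *)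

theory Defs
  imports "HOL-Analysis.Analysis"
begin

text \<open>The polytope P = [0,1]. Points are indexed 0,...,n-1 (paper: 1,...,n).\<close>
definition P :: "real set" where "P = {0..1}"

definition valid_instance :: "nat \<Rightarrow> (nat \<Rightarrow> real) \<Rightarrow> (nat \<Rightarrow> real) \<Rightarrow> bool" where
  "valid_instance n s d \<longleftrightarrow> n \<ge> 1 \<and> s 0 = 0 \<and>
     (\<forall>i<n. s i < d i) \<and> (\<forall>i j. i \<le> j \<and> j < n \<longrightarrow> s i \<le> s j)"

definition Tmax :: "nat \<Rightarrow> (nat \<Rightarrow> real) \<Rightarrow> real" where
  "Tmax n d = Max (d ` {..<n})"

definition present :: "nat \<Rightarrow> (nat \<Rightarrow> real) \<Rightarrow> (nat \<Rightarrow> real) \<Rightarrow> real \<Rightarrow> nat set" where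
  "present n s d t = {i. i < n \<and> s i \<le> t \<and> t \<le> d i}"

definition dmin :: "nat \<Rightarrow> (nat \<Rightarrow> real) \<Rightarrow> (nat \<Rightarrow> real) \<Rightarrow> real \<Rightarrow> (nat \<Rightarrow> real) \<Rightarrow> real" where
  "dmin n s d t X = Min ({infdist (X i) (frontier P) | i. i \<in> present n s d t} \<union>
                         {dist (X i) (X j) | i j. i \<in> present n s d t \<and> j \<in> present n s d t \<and> i \<noteq> j})"

text \<open>min over t <= T of d_min(t;X) (times at which no point is present impose no constraint).\<close>
definition atwc_value :: "nat \<Rightarrow> (nat \<Rightarrow> real) \<Rightarrow> (nat \<Rightarrow> real) \<Rightarrow> (nat \<Rightarrow> real) \<Rightarrow> real" where
  "atwc_value n s d X = Inf {dmin n s d t X | t. t \<le> Tmax n d \<and> present n s d t \<noteq> {}}"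

definition OPT_A :: "nat \<Rightarrow> (nat \<Rightarrow> real) \<Rightarrow> (nat \<Rightarrow> real) \<Rightarrow> real" where
  "OPT_A n s d = Sup {atwc_value n s d X | X. \<forall>i<n. X i \<in> P}"

text \<open>A (deterministic) algorithm maps an instance (n, s, d) and an index i to the location
  of point i. It is online if the location of point i depends only on what has been revealed
  when point i arrives: the arrival times s_0..s_i, and for earlier points j < i whether they
  have already departed (d_j <= s_i), and if so when; not on n or on future events.\<close>
definition online_alg :: "(nat \<Rightarrow> (nat \<Rightarrow> real) \<Rightarrow> (nat \<Rightarrow> real) \<Rightarrow> nat \<Rightarrow> real) \<Rightarrow> bool" where
  "online_alg A \<longleftrightarrow>
     (\<forall>n s d. valid_instance n s d \<longrightarrow> (\<forall>i<n. A n s d i \<in> P)) \<and>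
     (\<forall>n s d n' s' d' i.
        valid_instance n s d \<and> valid_instance n' s' d' \<and> i < n \<and> i < n' \<and>
        (\<forall>j\<le>i. s j = s' j) \<and>
        (\<forall>j<i. (d j \<le> s i \<or> d' j \<le> s' i) \<longrightarrow> d j = d' j)
        \<longrightarrow> A n s d i = A n' s' d' i)"

definition competitive :: "(nat \<Rightarrow> (nat \<Rightarrow> real) \<Rightarrow> (nat \<Rightarrow> real) \<Rightarrow> nat \<Rightarrow> real) \<Rightarrow> real \<Rightarrow> bool" where
  "competitive A \<sigma> \<longleftrightarrow>
     (\<forall>n s d. valid_instance n s d \<longrightarrow> OPT_A n s d \<le> \<sigma> * atwc_value n s d (A n s d))"

end

theory Submission
  imports Defs
begin


lemma gap_lemma:
  fixes x b :: "nat \<Rightarrow> real" and M :: nat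
  assumes M1: "M \<ge> 1" and bpos: "\<And>k. b k > 0"
    and bx: "\<And>i. i < M \<Longrightarrow> b i \<le> x i \<and> b i \<le> 1 - x i"
    and bd: "\<And>i j. i < M \<Longrightarrow> j < M \<Longrightarrow> i \<noteq> j \<Longrightarrow> b (max i j) \<le> \<bar>x i - x j\<bar>"
  shows "\<exists>own. (\<forall>p\<le>M. own p < M) \<and> (\<forall>k. card {p. p \<in> {..M} \<and> own p = k} \<le> 2)
            \<and> (\<Sum>p\<le>M. b (own p)) \<le> 1"
proof -
  define X where "X = x ` {..<M}"
  have inj: "inj_on x {..<M}"
  proof (rule inj_onI)
    fix i j assume "i \<in> {..<M}" "j \<in> {..<M}" "x i = x j"
    thus "i = j" using bd[of i j] bpos[of "max i j"] by fastforce
  qed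
  have X01: "u \<in> X \<Longrightarrow> 0 < u \<and> u < 1" for u
  proof -
    assume "u \<in> X"
    then obtain i where "i < M" "u = x i" unfolding X_def by auto
    thus ?thesis using bx[of i] bpos[of i] by auto
  qed
  define S where "S = insert 0 (insert 1 X)"
  have finS: "finite S" unfolding S_def X_def by simp
  have cardS: "card S = M + 2"
  proof -
    have "card X = M" unfolding X_def using card_image[OF inj] by simp
    moreover have "0 \<notin> X" "1 \<notin> X" using X01 by force+
    moreover have "finite X" unfolding X_def by simp
    ultimately show ?thesis unfolding S_def by simp
  qed
  obtain ys where ys: "sorted_wrt (<) ys" "set ys = S"
    using finite_set_strict_sorted[OF finS] by blast
  have dys: "distinct ys" using ys(1) by (simp add: strict_sorted_iff)
  have lys: "length ys = M + 2" using distinct_card[OF dys] ys(2) cardS by simp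
  have mono: "i < j \<Longrightarrow> j < M + 2 \<Longrightarrow> ys ! i < ys ! j" for i j
    using sorted_wrt_nth_less[OF ys(1)] lys by simp
  have inS: "q < M + 2 \<Longrightarrow> ys ! q \<in> S" for q
    using ys(2) lys nth_mem by (metis)
  have S01: "u \<in> S \<Longrightarrow> 0 \<le> u \<and> u \<le> 1" for u
    unfolding S_def using X01 by (auto dest: X01)
  have y0: "ys ! 0 = 0"
  proof -
    have "0 \<in> set ys" using ys(2) S_def by simp
    then obtain q where q: "q < M + 2" "ys ! q = 0" using lys by (metis in_set_conv_nth)
    show ?thesis
    proof (cases "q = 0")
      case False
      hence "ys ! 0 < 0" using mono[of 0 q] q by simp
      thus ?thesis using S01[OF inS[of 0]] by simp
    qed (use q in simp)
  qed
  have y1: "ys ! (M+1) = 1"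
  proof -
    have "1 \<in> set ys" using ys(2) S_def by simp
    then obtain q where q: "q < M + 2" "ys ! q = 1" using lys by (metis in_set_conv_nth)
    show ?thesis
    proof (cases "q = M+1")
      case False
      hence "1 < ys ! (M+1)" using mono[of q "M+1"] q by simp
      thus ?thesis using S01[OF inS[of "M+1"]] by simp
    qed (use q in simp)
  qed
  have inX: "0 < q \<Longrightarrow> q < M + 1 \<Longrightarrow> ys ! q \<in> X" for q
  proof -
    assume a: "0 < q" "q < M + 1"
    have "0 < ys ! q" using mono[of 0 q] a y0 by simp
    moreover have "ys ! q < 1" using mono[of q "M+1"] a y1 by simp
    ultimately show ?thesis using inS[of q] a unfolding S_def by auto
  qed
  define idx where "idx u = inv_into {..<M} x u" for u
  have idx: "u \<in> X \<Longrightarrow> idx u < M \<and> x (idx u) = u" for u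
    unfolding idx_def X_def using inv_into_into[of _ x "{..<M}"] by (auto intro: f_inv_into_f)
  define own where "own p = (if p = 0 then idx (ys ! 1) else if p = M then idx (ys ! M)
      else max (idx (ys ! p)) (idx (ys ! Suc p)))" for p
  have oM: "\<forall>p\<le>M. own p < M"
    using idx inX M1 unfolding own_def by (auto simp: max_def)
  have ogap: "b (own p) \<le> ys ! Suc p - ys ! p" if p: "p \<le> M" for p
  proof -
    consider "p = 0" | "p = M" "p \<noteq> 0" | "p \<noteq> 0" "p \<noteq> M" by blast
    thus ?thesis
    proof cases
      case 1
      have "ys ! 1 \<in> X" using inX[of 1] M1 by simp
      thus ?thesis using 1 idx[of "ys ! 1"] bx[of "idx (ys ! 1)"] y0 unfolding own_def by auto
    next
      case 2
      have "ys ! M \<in> X" using inX[of M] 2 by simp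
      thus ?thesis using 2 idx[of "ys ! M"] bx[of "idx (ys ! M)"] y1 unfolding own_def by auto
    next
      case 3
      have u: "ys ! p \<in> X" and v: "ys ! Suc p \<in> X" using inX 3 p by auto
      have lt: "ys ! p < ys ! Suc p" using mono[of p "Suc p"] p by simp
      let ?i = "idx (ys ! p)" and ?j = "idx (ys ! Suc p)"
      have "?i \<noteq> ?j" using idx[OF u] idx[OF v] lt by auto
      hence "b (max ?i ?j) \<le> \<bar>x ?i - x ?j\<bar>" using bd idx[OF u] idx[OF v] by blast
      thus ?thesis using 3 idx[OF u] idx[OF v] lt unfolding own_def by auto
    qed
  qed
  have sum1: "(\<Sum>p\<le>M. ys ! Suc p - ys ! p) = 1"
  proof -
    have "(\<Sum>p\<le>M. ys ! Suc p - ys ! p) = (\<Sum>p<Suc M. ys ! Suc p - ys ! p)"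
      by (simp add: lessThan_Suc_atMost)
    also have "\<dots> = ys ! Suc M - ys ! 0" by (rule sum_lessThan_telescope)
    finally show ?thesis using y0 y1 by simp
  qed
  have sumle: "(\<Sum>p\<le>M. b (own p)) \<le> 1"
    using sum_mono[of "{..M}" "\<lambda>p. b (own p)" "\<lambda>p. ys ! Suc p - ys ! p"] ogap sum1 by simp
  have fib: "card {p. p \<in> {..M} \<and> own p = k} \<le> 2" for k
  proof -
    have sub: "{p. p \<in> {..M} \<and> own p = k} \<subseteq> {p. p \<le> M \<and> ys ! p = x k} \<union> {p. p \<le> M \<and> ys ! Suc p = x k}"
    proof
      fix p assume "p \<in> {p. p \<in> {..M} \<and> own p = k}"
      hence p: "p \<le> M" "own p = k" by auto
      have "ys ! p = x k \<or> ys ! Suc p = x k"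
      proof -
        consider "p = 0" | "p = M" "p \<noteq> 0" | "p \<noteq> 0" "p \<noteq> M" by blast
        thus ?thesis
        proof cases
          case 1 thus ?thesis using p idx[of "ys ! 1"] inX[of 1] M1 unfolding own_def by auto
        next
          case 2 thus ?thesis using p idx[of "ys ! M"] inX[of M] unfolding own_def by auto
        next
          case 3
          have u: "ys ! p \<in> X" and v: "ys ! Suc p \<in> X" using inX 3 p by auto
          thus ?thesis using 3 p idx[OF u] idx[OF v] unfolding own_def by (auto simp: max_def split: if_splits)
        qed
      qed
      thus "p \<in> {p. p \<le> M \<and> ys ! p = x k} \<union> {p. p \<le> M \<and> ys ! Suc p = x k}" using p by auto
    qed
    have c1: "card {p. p \<le> M \<and> ys ! p = x k} \<le> 1"
    proof -
      have "card {p. p \<le> M \<and> ys ! p = x k} \<le> Suc 0"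
      proof (subst card_le_Suc0_iff_eq, simp, intro ballI)
        fix a c assume "a \<in> {p. p \<le> M \<and> ys ! p = x k}" "c \<in> {p. p \<le> M \<and> ys ! p = x k}"
        thus "a = c" using nth_eq_iff_index_eq[OF dys, of a c] lys by auto
      qed
      thus ?thesis by simp
    qed
    have c2: "card {p. p \<le> M \<and> ys ! Suc p = x k} \<le> 1"
    proof -
      have "card {p. p \<le> M \<and> ys ! Suc p = x k} \<le> Suc 0"
      proof (subst card_le_Suc0_iff_eq, simp, intro ballI)
        fix a c assume "a \<in> {p. p \<le> M \<and> ys ! Suc p = x k}" "c \<in> {p. p \<le> M \<and> ys ! Suc p = x k}"
        thus "a = c" using nth_eq_iff_index_eq[OF dys, of "Suc a" "Suc c"] lys by auto
      qed
      thus ?thesis by simp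
    qed
    have "card {p. p \<in> {..M} \<and> own p = k} \<le> card ({p. p \<le> M \<and> ys ! p = x k} \<union> {p. p \<le> M \<and> ys ! Suc p = x k})"
      by (rule card_mono[OF _ sub]) auto
    also have "\<dots> \<le> card {p. p \<le> M \<and> ys ! p = x k} + card {p. p \<le> M \<and> ys ! Suc p = x k}"
      by (rule card_Un_le)
    finally show ?thesis using c1 c2 by simp
  qed
  show ?thesis using oM fib sumle by blast
qed



lemma count_lemma:
  fixes own :: "nat \<Rightarrow> nat" and b :: "nat \<Rightarrow> real" and K :: nat
  assumes own: "\<forall>p\<le>2*K. own p < 2*K"
    and fib: "\<forall>k. card {p. p \<in> {..2*K} \<and> own p = k} \<le> 2"
    and anti: "\<And>i j. i \<le> j \<Longrightarrow> b j \<le> b i" and bpos: "\<And>k. b k > 0"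
  shows "2 * (\<Sum>k\<in>{K..<2*K}. b k) \<le> (\<Sum>p\<le>2*K. b (own p))"
proof -
  define F where "F = {..2*K}"
  define F' where "F' = {p \<in> F. K \<le> own p}"
  have fF: "finite F" unfolding F_def by simp
  have s1: "(\<Sum>p\<in>F'. b (own p) - b K) \<le> (\<Sum>p\<in>F. b (own p) - b K)"
  proof (rule sum_mono2[OF fF])
    show "F' \<subseteq> F" unfolding F'_def by auto
    show "\<And>p. p \<in> F - F' \<Longrightarrow> 0 \<le> b (own p) - b K"
    proof -
      fix p assume "p \<in> F - F'"
      hence "own p \<le> K" unfolding F'_def by auto
      thus "0 \<le> b (own p) - b K" using anti[of "own p" K] by simp
    qed
  qed
  have s2: "(\<Sum>p\<in>F'. b (own p) - b K) =
      (\<Sum>k\<in>{K..<2*K}. (\<Sum>p\<in>{p. p \<in> F' \<and> own p = k}. b (own p) - b K))"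
  proof (rule sum.group[symmetric])
    show "finite F'" unfolding F'_def using fF by simp
    show "finite {K..<2*K}" by simp
    show "own ` F' \<subseteq> {K..<2*K}" unfolding F'_def F_def using own by auto
  qed
  have s3: "(\<Sum>p\<in>{p. p \<in> F' \<and> own p = k}. b (own p) - b K) \<ge> 2 * (b k - b K)"
    if k: "k \<in> {K..<2*K}" for k
  proof -
    have "(\<Sum>p\<in>{p. p \<in> F' \<and> own p = k}. b (own p) - b K)
        = (\<Sum>p\<in>{p. p \<in> F' \<and> own p = k}. b k - b K)" by (rule sum.cong) auto
    also have "\<dots> = real (card {p. p \<in> F' \<and> own p = k}) * (b k - b K)" by simp
    finally have e: "(\<Sum>p\<in>{p. p \<in> F' \<and> own p = k}. b (own p) - b K)
        = real (card {p. p \<in> F' \<and> own p = k}) * (b k - b K)" .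
    have "card {p. p \<in> F' \<and> own p = k} \<le> card {p. p \<in> {..2*K} \<and> own p = k}"
      by (rule card_mono) (auto simp: F'_def F_def)
    hence "card {p. p \<in> F' \<and> own p = k} \<le> 2" using fib order_trans by blast
    hence c: "real (card {p. p \<in> F' \<and> own p = k}) \<le> 2" by simp
    have neg: "b k - b K \<le> 0" using anti[of K k] k by simp
    have "2 * (b k - b K) \<le> real (card {p. p \<in> F' \<and> own p = k}) * (b k - b K)"
      using mult_right_mono_neg[OF c neg] by simp
    thus ?thesis using e by simp
  qed
  have s4: "(\<Sum>k\<in>{K..<2*K}. 2 * (b k - b K)) = 2 * (\<Sum>k\<in>{K..<2*K}. b k) - 2 * real K * b K"
    by (simp add: sum_subtractf sum_distrib_left)
  have s5: "(\<Sum>p\<in>F. b (own p) - b K) = (\<Sum>p\<in>F. b (own p)) - (2 * real K + 1) * b K"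
    unfolding F_def by (simp add: sum_subtractf)
  have "2 * (\<Sum>k\<in>{K..<2*K}. b k) - 2 * real K * b K \<le> (\<Sum>p\<in>F. b (own p)) - (2 * real K + 1) * b K"
  proof -
    have "(\<Sum>k\<in>{K..<2*K}. 2 * (b k - b K)) \<le> (\<Sum>k\<in>{K..<2*K}. (\<Sum>p\<in>{p. p \<in> F' \<and> own p = k}. b (own p) - b K))"
      by (rule sum_mono) (rule s3)
    thus ?thesis using s1 s2 s4 s5 by linarith
  qed
  thus ?thesis using bpos[of K] unfolding F_def by (simp add: algebra_simps)
qed


lemma frontierP: "frontier P = {0, 1}"
  unfolding P_def frontier_def by auto

lemma infdist01_upper:
  fixes u :: real assumes "u \<in> P"
  shows "infdist u (frontier P) \<le> u" "infdist u (frontier P) \<le> 1 - u"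
proof -
  have "infdist u (frontier P) \<le> dist u 0" by (rule infdist_le) (simp add: frontierP)
  thus "infdist u (frontier P) \<le> u" using assms by (simp add: P_def dist_real_def)
  have "infdist u (frontier P) \<le> dist u 1" by (rule infdist_le) (simp add: frontierP)
  thus "infdist u (frontier P) \<le> 1 - u" using assms by (simp add: P_def dist_real_def)
qed

lemma infdist01_lower:
  fixes u c :: real assumes "c \<le> dist u 0" "c \<le> dist u 1"
  shows "c \<le> infdist u (frontier P)"
proof -
  have "infdist u (frontier P) = Inf (dist u ` {0,1})" unfolding infdist_def frontierP by simp
  also have "c \<le> Inf (dist u ` {0,1})" by (rule cInf_greatest) (use assms in auto)
  finally show ?thesis by simp
qed

lemma finite_present: "finite (present n s d t)"
  unfolding present_def by simp

lemma dmin_finite: "finite ({infdist (X i) (frontier P) | i. i \<in> present n s d t} \<union>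
                         {dist (X i) (X j) | i j. i \<in> present n s d t \<and> j \<in> present n s d t \<and> i \<noteq> j})"
proof -
  let ?pr = "present n s d t"
  have "{infdist (X i) (frontier P) | i. i \<in> ?pr} = (\<lambda>i. infdist (X i) (frontier P)) ` ?pr" by auto
  moreover have "{dist (X i) (X j) | i j. i \<in> ?pr \<and> j \<in> ?pr \<and> i \<noteq> j} \<subseteq> (\<lambda>(i,j). dist (X i) (X j)) ` (?pr \<times> ?pr)"
    by auto
  ultimately show ?thesis using finite_present
    by (metis (no_types, lifting) finite_Un finite_SigmaI finite_imageI finite_subset)
qed

lemma dmin_le1: "i \<in> present n s d t \<Longrightarrow> dmin n s d t X \<le> infdist (X i) (frontier P)"
  unfolding dmin_def by (rule Min_le[OF dmin_finite]) auto

lemma dmin_le2: "i \<in> present n s d t \<Longrightarrow> j \<in> present n s d t \<Longrightarrow> i \<noteq> j \<Longrightarrow> dmin n s d t X \<le> dist (X i) (X j)"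
  unfolding dmin_def by (rule Min_le[OF dmin_finite]) blast

lemma dmin_ge:
  assumes "present n s d t \<noteq> {}"
    and "\<And>i. i \<in> present n s d t \<Longrightarrow> c \<le> infdist (X i) (frontier P)"
    and "\<And>i j. i \<in> present n s d t \<Longrightarrow> j \<in> present n s d t \<Longrightarrow> i \<noteq> j \<Longrightarrow> c \<le> dist (X i) (X j)"
  shows "c \<le> dmin n s d t X"
  unfolding dmin_def using assms
  by (subst Min_ge_iff[OF dmin_finite]) auto

lemma dmin_nonneg: "present n s d t \<noteq> {} \<Longrightarrow> 0 \<le> dmin n s d t X"
  by (rule dmin_ge) (auto simp: infdist_nonneg)

lemma Tmax_ge: "valid_instance n s d \<Longrightarrow> 0 \<le> Tmax n d"
proof -
  assume v: "valid_instance n s d"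
  hence "d 0 \<le> Tmax n d" unfolding Tmax_def valid_instance_def by (intro Max_ge) auto
  moreover have "s 0 < d 0" "s 0 = 0" using v unfolding valid_instance_def by auto
  ultimately show ?thesis by simp
qed

lemma present0: "valid_instance n s d \<Longrightarrow> 0 \<in> present n s d 0"
  unfolding valid_instance_def present_def by force

lemma atwc_le:
  assumes "t \<le> Tmax n d" "present n s d t \<noteq> {}"
  shows "atwc_value n s d X \<le> dmin n s d t X"
  unfolding atwc_value_def
proof (rule cInf_lower)
  show "dmin n s d t X \<in> {dmin n s d t X |t. t \<le> Tmax n d \<and> present n s d t \<noteq> {}}" using assms by blast
  show "bdd_below {dmin n s d t X |t. t \<le> Tmax n d \<and> present n s d t \<noteq> {}}"
    by (rule bdd_belowI[of _ 0]) (auto intro: dmin_nonneg)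
qed

lemma atwc_ge:
  assumes v: "valid_instance n s d"
    and "\<And>t. t \<le> Tmax n d \<Longrightarrow> present n s d t \<noteq> {} \<Longrightarrow> c \<le> dmin n s d t X"
  shows "c \<le> atwc_value n s d X"
  unfolding atwc_value_def
proof (rule cInf_greatest)
  show "{dmin n s d t X |t. t \<le> Tmax n d \<and> present n s d t \<noteq> {}} \<noteq> {}"
    using Tmax_ge[OF v] present0[OF v] by blast
qed (use assms in auto)

lemma atwc_nonneg: "valid_instance n s d \<Longrightarrow> 0 \<le> atwc_value n s d X"
  by (rule atwc_ge) (auto intro: dmin_nonneg)

lemma OPT_ge:
  assumes v: "valid_instance n s d" and X: "\<forall>i<n. X i \<in> P"
  shows "atwc_value n s d X \<le> OPT_A n s d"
  unfolding OPT_A_def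
proof (rule cSup_upper)
  show "atwc_value n s d X \<in> {atwc_value n s d X |X. \<forall>i<n. X i \<in> P}" using X by blast
  show "bdd_above {atwc_value n s d X |X. \<forall>i<n. X i \<in> P}"
  proof (rule bdd_aboveI[of _ 1], clarify)
    fix Y assume Y: "\<forall>i<n. Y i \<in> P"
    have n: "0 < n" using v unfolding valid_instance_def by auto
    have "atwc_value n s d Y \<le> dmin n s d 0 Y"
      using atwc_le Tmax_ge[OF v] present0[OF v] by blast
    also have "\<dots> \<le> infdist (Y 0) (frontier P)" using dmin_le1 present0[OF v] by blast
    also have "\<dots> \<le> 1 - Y 0" using infdist01_upper(2) Y n by blast
    also have "\<dots> \<le> 1" using Y n by (auto simp: P_def)
    finally show "atwc_value n s d Y \<le> 1" .
  qed
qed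

lemma ln_step: fixes y :: real assumes "y > 0" shows "ln (y + 1) - ln y \<le> 1 / y"
proof -
  have "ln ((y+1)/y) \<le> (y+1)/y - 1" by (rule ln_le_minus_one) (use assms in simp)
  moreover have "ln ((y+1)/y) = ln (y+1) - ln y" using assms by (simp add: ln_div)
  moreover have "(y+1)/y - 1 = 1/y" using assms by (simp add: field_simps)
  ultimately show ?thesis by simp
qed

lemma harm_ln: "ln (real (K + m) + 2) - ln (real K + 2) \<le> (\<Sum>k\<in>{K..<K+m}. 1 / (real k + 2))"
proof (induction m)
  case 0 thus ?case by simp
next
  case (Suc m)
  have "{K..<K + Suc m} = insert (K+m) {K..<K+m}" by auto
  hence e: "(\<Sum>k\<in>{K..<K+Suc m}. 1 / (real k + 2)) = 1 / (real (K+m) + 2) + (\<Sum>k\<in>{K..<K+m}. 1 / (real k + 2))"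
    by simp
  have "ln (real (K+m) + 2 + 1) - ln (real (K+m) + 2) \<le> 1 / (real (K+m) + 2)"
    by (rule ln_step) simp
  moreover have "ln (real (K + Suc m) + 2) = ln (real (K+m) + 2 + 1)" by (simp add: add_ac)
  ultimately show ?case using Suc e by linarith
qed

theorem theorem1:
  assumes "online_alg A" and "competitive A \<sigma>"
  shows "\<sigma> \<ge> 2 * ln 2"
proof -
  define s0 :: "nat \<Rightarrow> real" where "s0 = (\<lambda>i. real i)"
  define dd :: "nat \<Rightarrow> nat \<Rightarrow> real" where "dd n = (\<lambda>i. real n)" for n
  define x where "x i = A (Suc i) s0 (dd (Suc i)) i" for i
  have valid: "valid_instance n s0 (dd n)" if "n \<ge> 1" for n
    using that unfolding valid_instance_def s0_def dd_def by auto
  have same: "A n s0 (dd n) i = x i" if "i < n" for n i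
  proof -
    have H: "\<forall>n s d n' s' d' i.
        valid_instance n s d \<and> valid_instance n' s' d' \<and> i < n \<and> i < n' \<and>
        (\<forall>j\<le>i. s j = s' j) \<and>
        (\<forall>j<i. (d j \<le> s i \<or> d' j \<le> s' i) \<longrightarrow> d j = d' j)
        \<longrightarrow> A n s d i = A n' s' d' i" using assms(1) unfolding online_alg_def by blast
    have D: "\<forall>j<i. (dd n j \<le> s0 i \<or> dd (Suc i) j \<le> s0 i) \<longrightarrow> dd n j = dd (Suc i) j"
      using that unfolding dd_def s0_def by auto
    show ?thesis unfolding x_def using H[rule_format, of n s0 "dd n" "Suc i" s0 "dd (Suc i)" i] D valid[of n] valid[of "Suc i"] that by auto
  qed
  have xP: "x i \<in> P" for i
  proof -
    have "\<forall>n s d. valid_instance n s d \<longrightarrow> (\<forall>i<n. A n s d i \<in> P)" using assms(1) unfolding online_alg_def by blast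
    thus ?thesis unfolding x_def using valid[of "Suc i"] by auto
  qed
  have Tm: "Tmax n (dd n) = real n" if "n \<ge> 1" for n
  proof -
    have "dd n ` {..<n} = {real n}" using that unfolding dd_def by (auto intro!: image_eqI[of _ _ 0])
    thus ?thesis unfolding Tmax_def by simp
  qed
  have pres: "present n s0 (dd n) (real n - 1) = {..<n}" if "n \<ge> 1" for n
    using that unfolding present_def s0_def dd_def by auto
  define V where "V n = atwc_value n s0 (dd n) (A n s0 (dd n))" for n
  have Vle1: "V n \<le> infdist (x i) (frontier P)" if "n \<ge> 1" "i < n" for n i
  proof -
    have "V n \<le> dmin n s0 (dd n) (real n - 1) (A n s0 (dd n))"
      unfolding V_def by (rule atwc_le) (use that Tm pres in auto)
    also have "\<dots> \<le> infdist (A n s0 (dd n) i) (frontier P)"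
      by (rule dmin_le1) (use that pres in auto)
    finally show ?thesis using same that by simp
  qed
  have Vle2: "V n \<le> dist (x i) (x j)" if "n \<ge> 1" "i < n" "j < n" "i \<noteq> j" for n i j
  proof -
    have "V n \<le> dmin n s0 (dd n) (real n - 1) (A n s0 (dd n))"
      unfolding V_def by (rule atwc_le) (use that Tm pres in auto)
    also have "\<dots> \<le> dist (A n s0 (dd n) i) (A n s0 (dd n) j)"
      by (rule dmin_le2) (use that pres in auto)
    finally show ?thesis using same that by simp
  qed
  have opt: "1 / (real n + 1) \<le> OPT_A n s0 (dd n)" if n: "n \<ge> 1" for n
  proof -
    define Xu where "Xu i = (real i + 1) / (real n + 1)" for i
    have XuP: "\<forall>i<n. Xu i \<in> P" unfolding Xu_def P_def by (auto simp: field_simps)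
    have "1 / (real n + 1) \<le> atwc_value n s0 (dd n) Xu"
    proof (rule atwc_ge[OF valid[OF n]])
      fix t assume "present n s0 (dd n) t \<noteq> {}"
      thus "1 / (real n + 1) \<le> dmin n s0 (dd n) t Xu"
      proof (rule dmin_ge)
        fix i assume "i \<in> present n s0 (dd n) t"
        hence i: "i < n" unfolding present_def by auto
        show "1 / (real n + 1) \<le> infdist (Xu i) (frontier P)"
        proof (rule infdist01_lower)
          show "1 / (real n + 1) \<le> dist (Xu i) 0" unfolding Xu_def dist_real_def
            by (simp add: divide_right_mono)
          have "1 - Xu i = (real n - real i) / (real n + 1)" unfolding Xu_def by (simp add: field_simps)
          moreover have "1 \<le> real n - real i" using i by simp
          ultimately have "1 / (real n + 1) \<le> 1 - Xu i" by (simp add: divide_right_mono)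
          moreover have "Xu i \<le> 1" using XuP i unfolding P_def by auto
          ultimately show "1 / (real n + 1) \<le> dist (Xu i) 1" unfolding dist_real_def by simp
        qed
      next
        fix i j assume "i \<in> present n s0 (dd n) t" "j \<in> present n s0 (dd n) t" "i \<noteq> j"
        hence ij: "i \<noteq> j" by auto
        have "dist (Xu i) (Xu j) = \<bar>real i - real j\<bar> / (real n + 1)"
        proof -
          have "Xu i - Xu j = (real i - real j) / (real n + 1)" unfolding Xu_def by (simp add: diff_divide_distrib[symmetric])
          thus ?thesis unfolding dist_real_def by (simp add: abs_divide)
        qed
        moreover have "1 \<le> \<bar>real i - real j\<bar>" using ij by linarith
        ultimately show "1 / (real n + 1) \<le> dist (Xu i) (Xu j)" by (simp add: divide_right_mono)
      qed
    qed
    also have "\<dots> \<le> OPT_A n s0 (dd n)" by (rule OPT_ge[OF valid[OF n] XuP])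
    finally show ?thesis .
  qed
  have comp: "OPT_A n s0 (dd n) \<le> \<sigma> * V n" if "n \<ge> 1" for n
    using assms(2) valid[OF that] unfolding competitive_def V_def by blast
  have Vnn: "0 \<le> V n" if "n \<ge> 1" for n unfolding V_def by (rule atwc_nonneg[OF valid[OF that]])
  have spos: "\<sigma> > 0"
  proof (rule ccontr)
    assume "\<not> \<sigma> > 0"
    hence "\<sigma> * V 1 \<le> 0" using Vnn[of 1] by (simp add: mult_nonpos_nonneg)
    moreover have "1 / (real 1 + 1) \<le> \<sigma> * V 1" using opt[of 1] comp[of 1] by simp
    ultimately show False by simp
  qed
  have key: "1 / (\<sigma> * (real n + 1)) \<le> V n" if "n \<ge> 1" for n
  proof -
    have "1 / (real n + 1) \<le> \<sigma> * V n" using opt[OF that] comp[OF that] by simp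
    hence h: "1 \<le> \<sigma> * V n * (real n + 1)" by (simp add: divide_le_eq)
    have "0 < \<sigma> * (real n + 1)" using spos by simp
    thus ?thesis using h by (simp add: pos_divide_le_eq mult_ac)
  qed
  define b where "b k = 1 / (\<sigma> * (real k + 2))" for k
  have bpos: "b k > 0" for k unfolding b_def using spos by simp
  have anti: "b j \<le> b i" if "i \<le> j" for i j
    unfolding b_def using spos that by (simp add: frac_le mult_left_mono)
  have bx: "b i \<le> x i \<and> b i \<le> 1 - x i" for i
  proof -
    have "b i = 1 / (\<sigma> * (real (Suc i) + 1))" unfolding b_def by simp
    also have "\<dots> \<le> V (Suc i)" by (rule key) simp
    also have "\<dots> \<le> infdist (x i) (frontier P)" by (rule Vle1) auto
    finally show ?thesis using infdist01_upper[OF xP[of i]] by linarith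
  qed
  have bd: "b (max i j) \<le> \<bar>x i - x j\<bar>" if "i \<noteq> j" for i j
  proof -
    have "b (max i j) = 1 / (\<sigma> * (real (Suc (max i j)) + 1))" unfolding b_def by simp
    also have "\<dots> \<le> V (Suc (max i j))" by (rule key) simp
    also have "\<dots> \<le> dist (x i) (x j)" by (rule Vle2) (use that in auto)
    finally show ?thesis by (simp add: dist_real_def)
  qed
  have bound: "2 * ln 2 - 2 / (real K + 1) \<le> \<sigma>" if K: "K \<ge> 1" for K
  proof -
    obtain own where own: "\<forall>p\<le>2*K. own p < 2*K" "\<forall>k. card {p. p \<in> {..2*K} \<and> own p = k} \<le> 2"
        "(\<Sum>p\<le>2*K. b (own p)) \<le> 1"
      using gap_lemma[of "2*K" b x] K bpos bx bd by auto
    have "2 * (\<Sum>k\<in>{K..<2*K}. b k) \<le> 1"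
      using count_lemma[of K own b, OF own(1) own(2) anti bpos] own(3) by linarith
    moreover have "(\<Sum>k\<in>{K..<2*K}. b k) = (1/\<sigma>) * (\<Sum>k\<in>{K..<2*K}. 1 / (real k + 2))"
      unfolding b_def by (simp add: sum_distrib_left)
    ultimately have "2 * (\<Sum>k\<in>{K..<2*K}. 1 / (real k + 2)) \<le> \<sigma>"
    proof -
      assume a: "2 * (\<Sum>k\<in>{K..<2*K}. b k) \<le> 1"
        "(\<Sum>k\<in>{K..<2*K}. b k) = (1/\<sigma>) * (\<Sum>k\<in>{K..<2*K}. 1 / (real k + 2))"
      have "2 * (\<Sum>k\<in>{K..<2*K}. 1 / (real k + 2)) = \<sigma> * (2 * (\<Sum>k\<in>{K..<2*K}. b k))"
        using a(2) spos by simp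
      also have "\<dots> \<le> \<sigma> * 1" using a(1) spos by (intro mult_left_mono) auto
      finally show ?thesis by simp
    qed
    moreover have "ln (real (K + K) + 2) - ln (real K + 2) \<le> (\<Sum>k\<in>{K..<K+K}. 1 / (real k + 2))"
      by (rule harm_ln)
    moreover have "ln (real (K + K) + 2) = ln 2 + ln (real K + 1)"
    proof -
      have "real (K + K) + 2 = 2 * (real K + 1)" by simp
      moreover have "ln (2 * (real K + 1)) = ln 2 + ln (real K + 1)" by (rule ln_mult_pos) auto
      ultimately show ?thesis by simp
    qed
    moreover have "ln (real K + 2) - ln (real K + 1) \<le> 1 / (real K + 1)"
      using ln_step[of "real K + 1"] by (simp add: add.assoc)
    moreover have "(\<Sum>k\<in>{K..<K+K}. 1 / (real k + 2)) = (\<Sum>k\<in>{K..<2*K}. 1 / (real k + 2))"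
      by (simp add: mult_2)
    ultimately show ?thesis by linarith
  qed
  show ?thesis
  proof (rule ccontr)
    assume "\<not> 2 * ln 2 \<le> \<sigma>"
    hence dpos: "2 * ln 2 - \<sigma> > 0" by simp
    obtain K :: nat where K: "2 / (2 * ln 2 - \<sigma>) < real K" using reals_Archimedean2 by blast
    have "0 < real K" using K dpos by (smt (verit) divide_pos_pos)
    hence K1: "K \<ge> 1" by simp
    have "2 / (2 * ln 2 - \<sigma>) < real K + 1" using K by simp
    hence "2 < (real K + 1) * (2 * ln 2 - \<sigma>)" using dpos by (simp add: field_simps)
    hence "2 / (real K + 1) < 2 * ln 2 - \<sigma>" by (simp add: field_simps)
    thus False using bound[OF K1] by simp
  qed
qed

end
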